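(* Let $l,l'$ be nonparallel lines in the plane, and let $B\in l$, $B'\in l'$ be points, neither of which is the intersection point of $l$ and $l'$. (1) The function $X\mapsto \mathrm{disprod}_{l,l'}(X)$ is strictly concave on the segment $\overline{BB'}$ and is maximized there at the midpoint of $B$ and $B'$. (2) Suppose moreover that $X,X'$ are two distinct points of $\overline{BB'}$ such that $B,X,X',B'$ lie in this order. Then: (a) if $\mathrm{disprod}_{l,l'}$, restricted to $\overline{XX'}$, is maximized at $X'$, then $|BX'|\le \frac12|BB'|$; (b) $|BX|-|B'X'|$ and $\mathrm{disprod}_{l,l'}(X)-\mathrm{disprod}_{l,l'}(X')$ have the same sign.
   Context: For a line $l$ and point $X$, $d_l(X)$ denotes the distance from $X$ to $l$. For two lines $l,l'$, $\mathrm{disprod}_{l,l'}(X)=d_l(X)\cdot d_{l'}(X)$. *)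

theory Defs
  imports "HOL-Analysis.Analysis"
begin

type_synonym point = "real ^ 2"

definition is_line :: "point set \<Rightarrow> bool" where
  "is_line l \<longleftrightarrow> (\<exists>a v. v \<noteq> 0 \<and> l = {a + t *\<^sub>R v | t. True})"

definition dl :: "point set \<Rightarrow> point \<Rightarrow> real" where
  "dl l X = infdist X l"

definition disprod :: "point set \<Rightarrow> point set \<Rightarrow> point \<Rightarrow> real" where
  "disprod l l' X = dl l X * dl l' X"

definition strict_concave_on :: "'a::real_vector set \<Rightarrow> ('a \<Rightarrow> real) \<Rightarrow> bool" where
  "strict_concave_on S f \<longleftrightarrow>
     (\<forall>x\<in>S. \<forall>y\<in>S. \<forall>t::real. x \<noteq> y \<and> 0 < t \<and> t < 1 \<longrightarrow>
        f ((1 - t) *\<^sub>R x + t *\<^sub>R y) > (1 - t) * f x + t * f y)"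

end

theory Submission
  imports Defs
begin

lemma line_props:
  assumes "is_line l"
  shows "closed l" "l \<noteq> {}" "\<And>P Y t. P \<in> l \<Longrightarrow> Y \<in> l \<Longrightarrow> P + t *\<^sub>R (Y - P) \<in> l"
proof -
  obtain a v where v: "v \<noteq> 0" and l: "l = {a + t *\<^sub>R v | t. True}"
    using assms unfolding is_line_def by blast
  show cl: "\<And>P Y t. P \<in> l \<Longrightarrow> Y \<in> l \<Longrightarrow> P + t *\<^sub>R (Y - P) \<in> l"
  proof -
    fix P Y t assume "P \<in> l" "Y \<in> l"
    then obtain p y where "P = a + p *\<^sub>R v" "Y = a + y *\<^sub>R v" using l by blast
    then have "P + t *\<^sub>R (Y - P) = a + (p + t * (y - p)) *\<^sub>R v"
      by (simp add: algebra_simps)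
    then show "P + t *\<^sub>R (Y - P) \<in> l" unfolding l by (intro CollectI exI[of _ "p + t * (y - p)"]) simp
  qed
  have "affine l"
    unfolding affine_def
  proof (intro ballI allI impI)
    fix x y u w assume "x \<in> l" "y \<in> l" "u + w = (1::real)"
    then have "w = 1 - u" by simp
    then have "u *\<^sub>R x + w *\<^sub>R y = y + u *\<^sub>R (x - y)"
      by (simp add: scaleR_left_diff_distrib scaleR_right_diff_distrib)
    then show "u *\<^sub>R x + w *\<^sub>R y \<in> l" using cl \<open>x \<in> l\<close> \<open>y \<in> l\<close> by simp
  qed
  then show "closed l" by (rule affine_closed)
  show "l \<noteq> {}" using l by blast
qed

lemma infdist_homothety:
  fixes S :: "point set"
  assumes ne: "S \<noteq> {}" and P: "P \<in> S"
    and cl: "\<And>Y t. Y \<in> S \<Longrightarrow> P + t *\<^sub>R (Y - P) \<in> S"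
    and t: "t \<ge> 0"
  shows "infdist (P + t *\<^sub>R (Q - P)) S = t * infdist Q S"
proof (cases "t = 0")
  case True
  then show ?thesis using P by simp
next
  case False
  then have tp: "t > 0" using t by simp
  have dh: "dist (P + t *\<^sub>R (Q - P)) (P + t *\<^sub>R (Y - P)) = t * dist Q Y" for Y
  proof -
    have "(P + t *\<^sub>R (Q - P)) - (P + t *\<^sub>R (Y - P)) = t *\<^sub>R (Q - Y)"
      by (simp add: algebra_simps)
    then show ?thesis using tp by (simp add: dist_norm)
  qed
  have le: "infdist (P + t *\<^sub>R (Q - P)) S \<le> t * infdist Q S"
  proof -
    have "infdist (P + t *\<^sub>R (Q - P)) S / t \<le> dist Q y" if "y \<in> S" for y
    proof -
      have "infdist (P + t *\<^sub>R (Q - P)) S \<le> dist (P + t *\<^sub>R (Q - P)) (P + t *\<^sub>R (y - P))"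
        by (rule infdist_le) (rule cl[OF that])
      then show ?thesis using dh tp by (simp add: field_simps)
    qed
    then have "infdist (P + t *\<^sub>R (Q - P)) S / t \<le> infdist Q S"
      unfolding infdist_notempty[OF ne] by (intro cINF_greatest ne) auto
    then show ?thesis using tp by (simp add: field_simps)
  qed
  have ge: "t * infdist Q S \<le> infdist (P + t *\<^sub>R (Q - P)) S"
    unfolding infdist_notempty[OF ne]
  proof (intro cINF_greatest ne)
    fix z assume z: "z \<in> S"
    define y where "y = P + (1/t) *\<^sub>R (z - P)"
    have y: "y \<in> S" unfolding y_def by (rule cl[OF z])
    have "z = P + t *\<^sub>R (y - P)" unfolding y_def using tp by (simp add: algebra_simps)
    then have "dist (P + t *\<^sub>R (Q - P)) z = t * dist Q y" using dh by simp
    moreover have "infdist Q S \<le> dist Q y" by (rule infdist_le[OF y])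
    ultimately show "t * (INF a\<in>S. dist Q a) \<le> dist (P + t *\<^sub>R (Q - P)) z"
      using tp unfolding infdist_notempty[OF ne] by simp
  qed
  show ?thesis using le ge by simp
qed


theorem lemma3:
  fixes l l' :: "point set" and B B' :: point
  assumes "is_line l" and "is_line l'"
    and "\<not> affine_parallel l l'"
    and "B \<in> l" and "B' \<in> l'"
    and "B \<notin> l \<inter> l'" and "B' \<notin> l \<inter> l'"
  shows "strict_concave_on (closed_segment B B') (disprod l l')
         \<and> (\<forall>Y\<in>closed_segment B B'. disprod l l' Y \<le> disprod l l' (midpoint B B'))
         \<and> (\<forall>X X'. X \<in> closed_segment B B' \<and> X' \<in> closed_segment B B' \<and> X \<noteq> X'
                  \<and> dist B X < dist B X' \<longrightarrow>
              ((\<forall>Y\<in>closed_segment X X'. disprod l l' Y \<le> disprod l l' X')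
                  \<longrightarrow> dist B X' \<le> dist B B' / 2)
            \<and> sgn (dist B X - dist B' X') = sgn (disprod l l' X - disprod l l' X'))"
proof -
  note L = line_props[OF assms(1)] and L' = line_props[OF assms(2)]
  have B'l: "B' \<notin> l" and Bl': "B \<notin> l'" using assms by auto
  define a where "a = infdist B' l"
  define b where "b = infdist B l'"
  have a: "a > 0" unfolding a_def by (rule infdist_pos_not_in_closed[OF L(1,2) B'l])
  have b: "b > 0" unfolding b_def by (rule infdist_pos_not_in_closed[OF L'(1,2) Bl'])
  define c where "c = a * b"
  have c: "c > 0" unfolding c_def using a b by simp
  have BB': "B \<noteq> B'" using assms by auto
  define D where "D = dist B B'"
  have D: "D > 0" unfolding D_def using BB' by simp
  define Xf where "Xf t = B + t *\<^sub>R (B' - B)" for t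
  have key: "disprod l l' (Xf t) = c * (t * (1 - t))" if "0 \<le> t" "t \<le> 1" for t
  proof -
    have 1: "dl l (Xf t) = t * a" unfolding dl_def Xf_def a_def
      by (rule infdist_homothety[OF L(2) assms(4) L(3)[OF assms(4)]]) (use that in auto)
    have "Xf t = B' + (1 - t) *\<^sub>R (B - B')" unfolding Xf_def by (simp add: algebra_simps)
    then have 2: "dl l' (Xf t) = (1 - t) * b" unfolding dl_def b_def
      using infdist_homothety[OF L'(2) assms(5) L'(3)[OF assms(5)], of "1 - t" B] that by simp
    show ?thesis unfolding disprod_def 1 2 c_def by (simp add: algebra_simps)
  qed
  have distB: "dist B (Xf t) = t * D" if "0 \<le> t" for t
  proof -
    have "B - Xf t = t *\<^sub>R (B - B')" unfolding Xf_def by (simp add: algebra_simps)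
    then show ?thesis using that by (simp add: dist_norm D_def)
  qed
  have distB': "dist B' (Xf t) = (1 - t) * D" if "t \<le> 1" for t
  proof -
    have "B' - Xf t = (1 - t) *\<^sub>R (B' - B)" unfolding Xf_def by (simp add: algebra_simps)
    then show ?thesis using that by (simp add: dist_norm D_def norm_minus_commute)
  qed
  have seg: "Y \<in> closed_segment B B' \<longleftrightarrow> (\<exists>t. 0 \<le> t \<and> t \<le> 1 \<and> Y = Xf t)" for Y
  proof -
    have "(1 - u) *\<^sub>R B + u *\<^sub>R B' = Xf u" for u unfolding Xf_def by (simp add: algebra_simps)
    then show ?thesis unfolding closed_segment_def by auto
  qed
  have comb: "(1 - u) *\<^sub>R Xf s + u *\<^sub>R Xf s' = Xf ((1 - u) * s + u * s')" for u s s'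
    unfolding Xf_def by (simp add: algebra_simps)
  have Xinj: "Xf s = Xf s' \<Longrightarrow> s = s'" for s s'
  proof -
    assume "Xf s = Xf s'"
    then have "(s - s') *\<^sub>R (B' - B) = 0" unfolding Xf_def by (simp add: algebra_simps)
    then show "s = s'" using BB' by simp
  qed
  have P1: "strict_concave_on (closed_segment B B') (disprod l l')"
    unfolding strict_concave_on_def
  proof (intro ballI allI impI)
    fix x y and u :: real
    assume x: "x \<in> closed_segment B B'" and y: "y \<in> closed_segment B B'" and h: "x \<noteq> y \<and> 0 < u \<and> u < 1"
    obtain s where s: "0 \<le> s" "s \<le> 1" "x = Xf s" using x seg by blast
    obtain s' where s': "0 \<le> s'" "s' \<le> 1" "y = Xf s'" using y seg by blast
    have ne: "s \<noteq> s'" using h s s' by auto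
    have r0: "0 \<le> (1 - u) * s + u * s'" using s s' h by simp
    have r1: "(1 - u) * s + u * s' \<le> 1"
    proof -
      have "(1 - u) * s \<le> (1 - u) * 1" using s h by (intro mult_left_mono) auto
      moreover have "u * s' \<le> u * 1" using s' h by (intro mult_left_mono) auto
      ultimately show ?thesis by simp
    qed
    have sq: "(s - s') * (s - s') > 0" using ne by (simp add: zero_less_mult_iff) linarith
    have "u * (1 - u) > 0" using h by simp
    then have "c * (u * (1 - u) * ((s - s') * (s - s'))) > 0" by (intro mult_pos_pos[OF c mult_pos_pos] sq)
    moreover have "c * (((1 - u) * s + u * s') * (1 - ((1 - u) * s + u * s')))
       - ((1 - u) * (c * (s * (1 - s))) + u * (c * (s' * (1 - s'))))
       = c * (u * (1 - u) * ((s - s') * (s - s')))"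
      by (simp add: algebra_simps)
    ultimately have "c * (((1 - u) * s + u * s') * (1 - ((1 - u) * s + u * s')))
       > (1 - u) * (c * (s * (1 - s))) + u * (c * (s' * (1 - s')))"
      by linarith
    then show "(1 - u) * disprod l l' x + u * disprod l l' y < disprod l l' ((1 - u) *\<^sub>R x + u *\<^sub>R y)"
      unfolding s(3) s'(3) comb using key[OF r0 r1] key[OF s(1,2)] key[OF s'(1,2)] by simp
  qed
  have mid: "midpoint B B' = Xf (1/2)"
  proof -
    have "Xf (1/2) + Xf (1/2) = (B + B) + ((1/2 + 1/2)::real) *\<^sub>R (B' - B)"
      unfolding Xf_def scaleR_left_distrib by (simp add: algebra_simps)
    also have "\<dots> = B + B'" by simp
    finally show ?thesis unfolding midpoint_eq_iff by simp
  qed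
  have P2: "\<forall>Y\<in>closed_segment B B'. disprod l l' Y \<le> disprod l l' (midpoint B B')"
  proof
    fix Y assume "Y \<in> closed_segment B B'"
    then obtain t where t: "0 \<le> t" "t \<le> 1" "Y = Xf t" using seg by blast
    have "c * (t * (1 - t)) \<le> c * (1/2 * (1 - 1/2))"
    proof (rule mult_left_mono)
      have "0 \<le> (t - 1/2)^2" by simp
      then show "t * (1 - t) \<le> 1/2 * (1 - 1/2)" by (simp add: algebra_simps power2_eq_square)
    qed (use c in simp)
    then show "disprod l l' Y \<le> disprod l l' (midpoint B B')"
      unfolding t(3) mid using key[OF t(1,2)] key[of "1/2"] by simp
  qed
  have P3: "((\<forall>Y\<in>closed_segment X X'. disprod l l' Y \<le> disprod l l' X')
                  \<longrightarrow> dist B X' \<le> dist B B' / 2)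
            \<and> sgn (dist B X - dist B' X') = sgn (disprod l l' X - disprod l l' X')"
    if X: "X \<in> closed_segment B B'" and X': "X' \<in> closed_segment B B'" and "X \<noteq> X'"
      and lt: "dist B X < dist B X'" for X X'
  proof -
    obtain s where s: "0 \<le> s" "s \<le> 1" "X = Xf s" using X seg by blast
    obtain s' where s': "0 \<le> s'" "s' \<le> 1" "X' = Xf s'" using X' seg by blast
    have ss: "s < s'" using lt distB[OF s(1)] distB[OF s'(1)] D s s' by simp
    have A: "dist B X' \<le> dist B B' / 2" if H: "\<forall>Y\<in>closed_segment X X'. disprod l l' Y \<le> disprod l l' X'"
    proof (rule ccontr)
      assume "\<not> ?thesis"
      then have s'h: "s' > 1/2" using distB[OF s'(1)] s' D unfolding D_def[symmetric] by simp
      define t where "t = max s (1/2)"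
      have t: "s \<le> t" "t < s'" "0 \<le> t" "t \<le> 1" using ss s s'h s' unfolding t_def by auto
      define u where "u = (t - s) / (s' - s)"
      have u: "0 \<le> u" "u \<le> 1" using t ss unfolding u_def by (auto simp: field_simps)
      have "u * (s' - s) = t - s" unfolding u_def using ss by simp
      then have "(1 - u) * s + u * s' = t" by (simp add: algebra_simps)
      then have "Xf t \<in> closed_segment X X'"
        unfolding closed_segment_def s(3) s'(3) using u comb by (metis (mono_tags, lifting) mem_Collect_eq)
      then have "disprod l l' (Xf t) \<le> disprod l l' X'" using H by blast
      then have le: "c * (t * (1 - t)) \<le> c * (s' * (1 - s'))" using key[OF t(3,4)] key[OF s'(1,2)] s'(3) by simp
      have "(t - s') * (1 - t - s') > 0"
        using t s'h unfolding t_def by (intro mult_neg_neg) auto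
      then have "c * ((t - s') * (1 - t - s')) > 0" using c by simp
      then show False using le by (simp add: algebra_simps)
    qed
    have e1: "dist B X - dist B' X' = (s + s' - 1) * D"
      using distB[OF s(1)] distB'[OF s'(2)] s(3) s'(3) by (simp add: algebra_simps)
    have e2: "disprod l l' X - disprod l l' X' = (c * (s' - s)) * (s + s' - 1)"
      using key[OF s(1,2)] key[OF s'(1,2)] s(3) s'(3) by (simp add: algebra_simps)
    have pos: "c * (s' - s) > 0" using c ss by simp
    have S1: "sgn (dist B X - dist B' X') = sgn (s + s' - 1)" unfolding e1 sgn_mult using D by simp
    have S2: "sgn (disprod l l' X - disprod l l' X') = sgn (s + s' - 1)" unfolding e2 sgn_mult[of "c * (s' - s)"] using pos by (simp only: sgn_pos mult_1)
    show ?thesis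
      apply (rule conjI)
       apply (rule impI)
       apply (erule A)
      apply (rule trans[OF S1 S2[symmetric]])
      done
  qed
  show ?thesis
    apply (rule conjI[OF P1 conjI[OF P2]])
    apply (intro allI impI)
    apply (elim conjE)
    apply (rule P3)
       apply assumption+
    done
qed

end
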